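(* Let $F$ be a field and let $A$ be a unital alternative $F$-algebra. If $A$ is finite-dimensional or reversible, then $A$ is von-Neumann finite.
   Context: An $F$-algebra is a vector space $A$ over $F$ with a bilinear multiplication $A\times A\to A$, not necessarily associative; unital means there is $1\in A$ with $1a=a1=a$ for all $a$. $A$ is alternative if $a^2b=a(ab)$ and $ab^2=(ab)b$ for all $a,b\in A$. $A$ is von-Neumann finite if for all $a,b\in A$, $ab=1$ implies $ba=1$. $A$ is reversible if for all $a,b\in A$, $ab=0$ implies $ba=0$. *)

theory Defs
  imports Complex_Main
begin

definition f_algebra :: "('f::field \<Rightarrow> 'a::ab_group_add \<Rightarrow> 'a) \<Rightarrow> ('a \<Rightarrow> 'a \<Rightarrow> 'a) \<Rightarrow> bool" where
  "f_algebra scale mult \<longleftrightarrow> vector_space scale \<and>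
     (\<forall>x. Vector_Spaces.linear scale scale (mult x)) \<and>
     (\<forall>y. Vector_Spaces.linear scale scale (\<lambda>x. mult x y))"

definition unit_elem :: "('a \<Rightarrow> 'a \<Rightarrow> 'a) \<Rightarrow> 'a \<Rightarrow> bool" where
  "unit_elem mult e \<longleftrightarrow> (\<forall>a. mult e a = a \<and> mult a e = a)"

definition alternative :: "('a \<Rightarrow> 'a \<Rightarrow> 'a) \<Rightarrow> bool" where
  "alternative mult \<longleftrightarrow>
     (\<forall>a b. mult (mult a a) b = mult a (mult a b) \<and> mult a (mult b b) = mult (mult a b) b)"

definition finite_dimensional :: "('f::field \<Rightarrow> 'a::ab_group_add \<Rightarrow> 'a) \<Rightarrow> bool" where
  "finite_dimensional scale \<longleftrightarrow> (\<exists>B. finite B \<and> module.span scale B = UNIV)"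

definition von_neumann_finite :: "('a \<Rightarrow> 'a \<Rightarrow> 'a) \<Rightarrow> 'a \<Rightarrow> bool" where
  "von_neumann_finite mult e \<longleftrightarrow> (\<forall>a b. mult a b = e \<longrightarrow> mult b a = e)"

definition reversible :: "('a::zero \<Rightarrow> 'a \<Rightarrow> 'a) \<Rightarrow> bool" where
  "reversible mult \<longleftrightarrow> (\<forall>a b. mult a b = 0 \<longrightarrow> mult b a = 0)"

end

theory Submission
  imports Defs
begin


locale altalg =
  fixes mult :: "'a::ab_group_add \<Rightarrow> 'a \<Rightarrow> 'a" (infixl \<open>\<star>\<close> 70)
  assumes addL: "(x + y) \<star> z = x \<star> z + y \<star> z"
    and addR: "z \<star> (x + y) = z \<star> x + z \<star> y"
    and altL: "(x \<star> x) \<star> y = x \<star> (x \<star> y)"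
    and altR: "x \<star> (y \<star> y) = (x \<star> y) \<star> y"
begin

lemma zeroL[simp]: "0 \<star> x = 0" using addL[of 0 0 x] by simp
lemma zeroR[simp]: "x \<star> 0 = 0" using addR[of x 0 0] by simp
lemma minusL: "(- x) \<star> z = - (x \<star> z)" using minus_unique[of "x \<star> z" "(-x) \<star> z"] addL[of x "-x" z] by simp
lemma minusR: "z \<star> (- x) = - (z \<star> x)" using minus_unique[of "z \<star> x" "z \<star> (-x)"] addR[of z x "-x"] by simp
lemma diffL: "(x - y) \<star> z = x \<star> z - y \<star> z" using addL[of x "-y" z] by (simp add: minusL)
lemma diffR: "z \<star> (x - y) = z \<star> x - z \<star> y" using addR[of z x "-y"] by (simp add: minusR)

lemmas dist = addL addR minusL minusR diffL diffR

definition as :: "'a \<Rightarrow> 'a \<Rightarrow> 'a \<Rightarrow> 'a" where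
  "as x y z = (x \<star> y) \<star> z - x \<star> (y \<star> z)"

lemma LL: "as x x z = 0" by (simp add: as_def altL)
lemma RR: "as x z z = 0" by (simp add: as_def altR)

lemma skewL: "as x y z + as y x z = 0"
proof -
  have "as (x+y) (x+y) z = 0" by (rule LL)
  then show ?thesis using LL[of x z] LL[of y z]
    by (simp add: as_def dist algebra_simps)
qed

lemma skewR: "as x y z + as x z y = 0"
proof -
  have "as x (y+z) (y+z) = 0" by (rule RR)
  then show ?thesis using RR[of x y] RR[of x z]
    by (simp add: as_def dist algebra_simps)
qed

lemma teich: "as (w \<star> x) y z - as w (x \<star> y) z + as w x (y \<star> z) - w \<star> as x y z - as w x y \<star> z = 0"
  by (simp add: as_def dist algebra_simps)

lemma moufang_aux: "as u x (z \<star> x) = x \<star> as u x z"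
proof -
  have r1: "as z x (x\<star>u) + as x z (x\<star>u) = 0" by (rule skewL)
  have r2: "as x z (x\<star>u) + as x (x\<star>u) z = 0" by (rule skewR)
  have r3: "as (x\<star>x) z u + as z (x\<star>x) u = 0" by (rule skewL)
  have r4: "as (x\<star>x) z u + as (x\<star>x) u z = 0" by (rule skewR)
  have r5: "as (x \<star> x) u z - as x (x \<star> u) z + as x x (u \<star> z) - x \<star> as x u z - as x x u \<star> z = 0" by (rule teich)
  have r6: "as (z \<star> x) x u - as z (x \<star> x) u + as z x (x \<star> u) - z \<star> as x x u - as z x x \<star> u = 0" by (rule teich)
  have r7: "as (z\<star>x) x u + as (z\<star>x) u x = 0" by (rule skewR)
  have r8: "z \<star> as x x u = 0" by (simp add: LL)
  have r9: "as u x (z\<star>x) + as u (z\<star>x) x = 0" by (rule skewR)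
  have r10: "as u (z\<star>x) x + as (z\<star>x) u x = 0" by (rule skewL)
  have r11: "x \<star> (as u x z + as x u z) = 0" by (simp add: skewL)
  have r12: "as z x x \<star> u = 0" by (simp add: RR)
  have r13: "as x x (u\<star>z) = 0" by (rule LL)
  have r14: "as x x u \<star> z = 0" by (simp add: LL)
  have "as u x (z \<star> x) - x \<star> as u x z =
     (as z x (x\<star>u) + as x z (x\<star>u)) - (as x z (x\<star>u) + as x (x\<star>u) z)
     - (as (x\<star>x) z u + as z (x\<star>x) u) + (as (x\<star>x) z u + as (x\<star>x) u z)
     - (as (x \<star> x) u z - as x (x \<star> u) z + as x x (u \<star> z) - x \<star> as x u z - as x x u \<star> z)
     - (as (z \<star> x) x u - as z (x \<star> x) u + as z x (x \<star> u) - z \<star> as x x u - as z x x \<star> u)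
     + (as (z\<star>x) x u + as (z\<star>x) u x) - z \<star> as x x u
     + (as u x (z\<star>x) + as u (z\<star>x) x) - (as u (z\<star>x) x + as (z\<star>x) u x)
     - x \<star> (as u x z + as x u z) - as z x x \<star> u + as x x (u\<star>z) - as x x u \<star> z"
    by (simp add: dist algebra_simps)
  also have "\<dots> = 0" by (simp only: r5 r6) (simp only: r1 r2 r3 r4 r7 r8 r9 r10 r11 r12 r13 r14, simp)
  finally show ?thesis by simp
qed

end


context altalg begin
lemma skewL': "as y x z = - as x y z" using minus_unique[OF skewL[of x y z]] by simp
lemma skewR': "as x z y = - as x y z" using minus_unique[OF skewR[of x y z]] by simp

lemma as_step: "as (z \<star> x) x y = x \<star> as z x y"
proof -
  have "as (z \<star> x) x y = - as x (z \<star> x) y" by (rule skewL')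
  also have "- as x (z \<star> x) y = as x y (z \<star> x)" using skewR'[of x "z \<star> x" y] by simp
  also have "as x y (z \<star> x) = - as y x (z \<star> x)" by (rule skewL')
  also have "as y x (z \<star> x) = x \<star> as y x z" by (rule moufang_aux)
  also have "as y x z = - as z x y"
  proof -
    have 1: "as y x z = - as y z x" by (rule skewR')
    have 2: "as y z x = - as z y x" by (rule skewL')
    have 3: "as z y x = - as z x y" by (rule skewR')
    show ?thesis using 1 2 3 by simp
  qed
  finally show ?thesis by (simp add: minusR)
qed
end

lemma basic:
  fixes scale :: "'f::field \<Rightarrow> 'a::ab_group_add \<Rightarrow> 'a"
  assumes "f_algebra scale mult" "alternative mult"
  shows "altalg mult"
proof -
  from assms(1) have L: "\<And>x. module_hom scale scale (mult x)"
    and R: "\<And>y. module_hom scale scale (\<lambda>x. mult x y)"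
    by (auto simp: f_algebra_def module_hom_iff_linear)
  show ?thesis
  proof
    fix x y z
    show "mult (x + y) z = mult x z + mult y z" using module_hom.add[OF R] .
    show "mult z (x + y) = mult z x + mult z y" using module_hom.add[OF L] .
    show "mult (mult x x) y = mult x (mult x y)" "mult x (mult y y) = mult (mult x y) y"
      using assms(2) by (auto simp: alternative_def)
  qed
qed

context altalg begin
lemma rev_case:
  assumes u: "unit_elem mult one" and r: "reversible mult"
    and ab: "mult a b = one"
  shows "mult b a = one"
proof -
  have u1: "\<And>x. one \<star> x = x" and u2: "\<And>x. x \<star> one = x" using u by (auto simp: unit_elem_def)
  define f where "f = one - b \<star> a"
  have "as a b a = 0" using skewL[of a b a] RR[of b a] by simp
  then have "a \<star> (b \<star> a) = a" by (simp add: as_def ab u1)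
  then have af: "a \<star> f = 0" by (simp add: f_def diffR u2)
  then have fa: "f \<star> a = 0" using r by (simp add: reversible_def)
  have "as b a b = 0" using skewL[of b a b] RR[of a b] by simp
  then have "(b \<star> a) \<star> b = b" by (simp add: as_def ab u2)
  then have fb: "f \<star> b = 0" by (simp add: f_def diffL u1)
  have "as f a b = - as a f b" by (rule skewL')
  also have "\<dots> = 0" by (simp add: as_def af fb)
  finally have "as f a b = 0" .
  then have "f = 0" by (simp add: as_def fa ab u2)
  then show ?thesis by (simp add: f_def)
qed

lemma fd_case:
  fixes scale :: "'f::field \<Rightarrow> 'a \<Rightarrow> 'a"
  assumes fa: "f_algebra scale mult"
    and u: "unit_elem mult one" and fd: "finite_dimensional scale"
    and ab: "mult a b = one"
  shows "mult b a = one"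
proof -
  interpret vs: vector_space scale using fa by (simp add: f_algebra_def)
  have u1: "\<And>x. one \<star> x = x" and u2: "\<And>x. x \<star> one = x" using u by (auto simp: unit_elem_def)
  have Rlin: "Vector_Spaces.linear scale scale (\<lambda>z. z \<star> a)" using fa by (simp add: f_algebra_def)
  have Rhom: "module_hom scale scale (\<lambda>z. z \<star> a)" using Rlin by (simp add: module_hom_iff_linear)
  have Bhom: "module_hom scale scale (\<lambda>z. z \<star> b)" using fa by (simp add: f_algebra_def module_hom_iff_linear)
  obtain B where B: "finite B" "vs.span B = UNIV" using fd by (auto simp: finite_dimensional_def)
  obtain B' where B': "B' \<subseteq> B" "vs.independent B'" "B \<subseteq> vs.span B'"
    by (rule vs.maximal_independent_subset)
  have "vs.span B' = UNIV"
    using B(2) vs.span_mono[OF B'(3)] vs.span_span by auto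
  moreover have "finite B'" using B'(1) B(1) finite_subset by blast
  ultimately interpret fdv: finite_dimensional_vector_space scale B'
    using B'(2) by unfold_locales auto
  interpret pair: finite_dimensional_vector_space_pair_1 scale B' scale by unfold_locales
  define x where "x k = ((\<lambda>z. z \<star> a) ^^ k) one" for k
  define V where "V = vs.span (range x)"
  have as_x: "as (x k) a b = 0" for k
  proof (induction k)
    case 0 then show ?case by (simp add: x_def as_def u1 ab)
  next
    case (Suc k)
    have "x (Suc k) = x k \<star> a" by (simp add: x_def)
    then show ?case using as_step[of "x k" a b] Suc by simp
  qed
  have K: "vs.subspace {z. (z \<star> a) \<star> b = z}"
    unfolding vs.subspace_def
    using module_hom.add[OF Rhom] module_hom.add[OF Bhom]
      module_hom.scale[OF Rhom] module_hom.scale[OF Bhom]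
    by auto
  have inV: "z \<in> V \<Longrightarrow> (z \<star> a) \<star> b = z" for z
  proof -
    assume "z \<in> V"
    then show ?thesis unfolding V_def
    proof (rule vs.span_subspace_induct[where P="{z. (z \<star> a) \<star> b = z}", simplified])
      show "vs.subspace {z. (z \<star> a) \<star> b = z}" by (fact K)
      fix y assume "y \<in> range x"
      then obtain k where "y = x k" by auto
      then show "(y \<star> a) \<star> b = y" using as_x[of k] by (simp add: as_def ab u2)
    qed
  qed
  have inj: "inj_on (\<lambda>z. z \<star> a) (vs.span V)"
    unfolding V_def vs.span_span by (rule inj_onI) (metis inV V_def)
  have sub: "(\<lambda>z. z \<star> a) ` V \<subseteq> V"
  proof -
    have "(\<lambda>z. z \<star> a) ` V = vs.span ((\<lambda>z. z \<star> a) ` range x)"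
      unfolding V_def by (simp add: module_hom.span_image[OF Rhom])
    also have "\<dots> \<subseteq> V" unfolding V_def
    proof (rule vs.span_mono)
      show "(\<lambda>z. z \<star> a) ` range x \<subseteq> range x"
      proof
        fix y assume "y \<in> (\<lambda>z. z \<star> a) ` range x"
        then obtain k where "y = x k \<star> a" by auto
        then have "y = x (Suc k)" by (simp add: x_def)
        then show "y \<in> range x" by auto
      qed
    qed
    finally show ?thesis .
  qed
  have subsp: "vs.subspace ((\<lambda>z. z \<star> a) ` V)"
    unfolding V_def by (rule module_hom.subspace_image[OF Rhom]) simp
  have dimeq: "vs.dim ((\<lambda>z. z \<star> a) ` V) = vs.dim V"
    by (rule pair.dim_image_eq[OF Rlin inj])
  have eq: "(\<lambda>z. z \<star> a) ` V = V"
    by (rule fdv.subspace_dim_equal[OF subsp _ sub]) (simp_all add: V_def dimeq[unfolded V_def])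
  have "one \<in> V" unfolding V_def by (rule vs.span_base) (auto simp: x_def intro: range_eqI[of _ _ 0])
  then obtain z where z: "z \<in> V" "z \<star> a = one" using eq by (metis imageE)
  have "z = b" using inV[OF z(1)] z(2) u1 by simp
  then show ?thesis using z(2) by simp
qed
end

theorem proposition4p1:
  fixes scale :: "'f::field \<Rightarrow> 'a::ab_group_add \<Rightarrow> 'a"
    and mult :: "'a \<Rightarrow> 'a \<Rightarrow> 'a"
    and one :: 'a
  assumes "f_algebra scale mult"
    and "unit_elem mult one"
    and "alternative mult"
    and "finite_dimensional scale \<or> reversible mult"
  shows "von_neumann_finite mult one"
  unfolding von_neumann_finite_def
proof (intro allI impI)
  fix a b assume ab: "mult a b = one"
  from assms(4) show "mult b a = one"
  proof
    assume "finite_dimensional scale"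
    then show ?thesis using altalg.fd_case[OF basic[OF assms(1) assms(3)] assms(1) assms(2) _ ab] by blast
  next
    assume "reversible mult"
    then show ?thesis using altalg.rev_case[OF basic[OF assms(1) assms(3)] assms(2) _ ab] by blast
  qed
qed
end
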